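(* Let $H$ be a Heyting algebra, $f:H\to H$ a strong monotone function and $a\in H$. If $f$ has a least fixed point $\mu.f$, then the functions $x\mapsto a\to f(x)$ and $x\mapsto a\wedge f(x)$ have least fixed points, and $\mu.(a\to f)=a\to\mu.f$ and $\mu.(a\wedge f)=a\wedge\mu.f$.
   Context: A monotone function $f:H\to H$ on a Heyting algebra is strong if $x\wedge f(y)\le f(x\wedge y)$ for all $x,y\in H$. For a monotone $g$, $\mu.g$ denotes the least prefixed point of $g$ (least $p$ with $g(p)\le p$), which when it exists is the least fixed point. *)

theory Defs
  imports Main
begin

class heyting_algebra = bounded_lattice +
  fixes himp :: "'a \<Rightarrow> 'a \<Rightarrow> 'a"
  assumes himp_residuation: "inf x y \<le> z \<longleftrightarrow> x \<le> himp y z"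

definition strong :: "('a::heyting_algebra \<Rightarrow> 'a) \<Rightarrow> bool" where
  "strong f \<longleftrightarrow> (\<forall>x y. inf x (f y) \<le> f (inf x y))"

definition is_least_prefixed :: "('a::order \<Rightarrow> 'a) \<Rightarrow> 'a \<Rightarrow> bool" where
  "is_least_prefixed g p \<longleftrightarrow> g p \<le> p \<and> (\<forall>q. g q \<le> q \<longrightarrow> p \<le> q)"

end

theory Submission
  imports Defs
begin

lemma res: "inf x y \<le> z \<longleftrightarrow> x \<le> himp y z" for x y z :: "'a::heyting_algebra"
  by (rule himp_residuation)

lemma mp1: "inf a (himp a y) \<le> (y::'a::heyting_algebra)"
  using res[of "himp a y" a y] by (simp add: inf_commute)

lemma mp2: "inf a (himp a y) \<le> inf a (y::'a::heyting_algebra)"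
  using mp1 by simp

lemma k1: "y \<le> himp a (y::'a::heyting_algebra)"
  using res[of y a y] by simp

lemma hmono: "y \<le> z \<Longrightarrow> himp a y \<le> himp a (z::'a::heyting_algebra)"
  using res[of "himp a y" a z] mp1[of a y] by (metis inf_commute order_trans)

lemma hh: "himp a (himp a y) \<le> himp a (y::'a::heyting_algebra)"
proof -
  have "inf (himp a (himp a y)) a \<le> himp a y" using res by blast
  hence "inf (inf (himp a (himp a y)) a) a \<le> y" using res by blast
  hence "inf (himp a (himp a y)) a \<le> y" by (simp add: inf_assoc)
  thus ?thesis using res by blast
qed

theorem mainTheorem6:
  fixes f :: "'a::heyting_algebra \<Rightarrow> 'a" and a p :: 'a
  assumes "mono f" and "strong f"
    and "is_least_prefixed f p"
  shows "is_least_prefixed (\<lambda>x. himp a (f x)) (himp a p)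
       \<and> is_least_prefixed (\<lambda>x. inf a (f x)) (inf a p)"
proof -
  have st: "\<And>x y. inf x (f y) \<le> f (inf x y)" using assms(2) by (simp add: strong_def)
  have mo: "\<And>x y. x \<le> y \<Longrightarrow> f x \<le> f y" using assms(1) by (simp add: mono_def)
  have fp: "f p \<le> p" and lp: "\<And>q. f q \<le> q \<Longrightarrow> p \<le> q"
    using assms(3) by (auto simp: is_least_prefixed_def)
  have pfp: "p \<le> f p" using lp mo[OF fp] by blast
  have key: "\<And>q. f (himp a q) \<le> himp a (f q)"
  proof -
    fix q
    have "inf (f (himp a q)) a \<le> f q"
      using st[of a "himp a q"] mo[OF mp1[of a q]] by (metis inf_commute order_trans)
    thus "f (himp a q) \<le> himp a (f q)" using res by blast
  qed
  have A: "is_least_prefixed (\<lambda>x. himp a (f x)) (himp a p)"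
    unfolding is_least_prefixed_def
  proof (intro conjI allI impI)
    have "inf (himp a (f (himp a p))) a \<le> p"
    proof -
      have "inf (himp a (f (himp a p))) a \<le> inf a (f (himp a p))"
        using mp2 by (metis inf_commute)
      also have "\<dots> \<le> f (inf a (himp a p))" by (rule st)
      also have "\<dots> \<le> f p" by (rule mo[OF mp1])
      finally show ?thesis using fp by (rule order_trans)
    qed
    thus "himp a (f (himp a p)) \<le> himp a p" using res by blast
  next
    fix q assume q: "himp a (f q) \<le> q"
    have "f (himp a q) \<le> himp a q"
      using key[of q] k1[of "f q" a] q hmono by (meson order_trans)
    hence "p \<le> himp a q" by (rule lp)
    have "himp a p \<le> himp a (f p)" by (rule hmono[OF pfp])
    also have "\<dots> \<le> himp a (f (himp a q))" by (rule hmono[OF mo[OF \<open>p \<le> himp a q\<close>]])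
    also have "\<dots> \<le> himp a (himp a (f q))" by (rule hmono[OF key])
    also have "\<dots> \<le> himp a (f q)" by (rule hh)
    also have "\<dots> \<le> q" by (rule q)
    finally show "himp a p \<le> q" .
  qed
  have B: "is_least_prefixed (\<lambda>x. inf a (f x)) (inf a p)"
    unfolding is_least_prefixed_def
  proof (intro conjI allI impI)
    have "f (inf a p) \<le> p" using mo[of "inf a p" p] fp by auto
    thus "inf a (f (inf a p)) \<le> inf a p" by (auto intro: le_infI2)
  next
    fix q assume q: "inf a (f q) \<le> q"
    have "inf a (f (himp a q)) \<le> inf a (f q)"
      using st[of a "himp a q"] mo[OF mp1[of a q]] by (meson inf_le1 le_inf_iff order_trans)
    hence "inf (f (himp a q)) a \<le> q" using q by (metis inf_commute order_trans)
    hence "f (himp a q) \<le> himp a q" using res by blast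
    hence "p \<le> himp a q" by (rule lp)
    hence "inf p a \<le> q" using res by blast
    thus "inf a p \<le> q" by (simp add: inf_commute)
  qed
  show ?thesis using A B by blast
qed

end
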